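(* Let $A$ be a commutative ring, $S=A[x_0,\dots,x_d]$, and identify $P_{S|A}=S\otimes_AS$ with $A[\boldsymbol{x},\boldsymbol{y}]$ where $x_i=x_i\otimes1$, $y_i=1\otimes x_i$. For each $n\geqslant0$, let $\Delta^{[n+1]}_{S|A}=((y_0-x_0)^{n+1},\dots,(y_d-x_d)^{n+1})$ and $P^{[n]}_{S|A}=P_{S|A}/\Delta^{[n+1]}_{S|A}$. Then the maps \[ H^{d+1}(\Delta^{[n+1]}_{S|A};\,P_{S|A})\xrightarrow{\ \gamma_n\ }\operatorname{Hom}_S(P^{[n]}_{S|A},S)\xrightarrow{\ \varrho^*\ } D^{[n]}_{S|A} \] are isomorphisms of $P_{S|A}$-modules.
   Context: $H^{d+1}(\Delta^{[n+1]}_{S|A};P_{S|A})$ is the top Koszul cohomology on the elements $(y_i-x_i)^{n+1}$, which equals $P^{[n]}_{S|A}$. $P_{S|A}$ is an $S$-module via $s\mapsto s\otimes1$; $P^{[n]}_{S|A}$ is a free $S$-module with basis $(y_0-x_0)^{a_0}\cdots(y_d-x_d)^{a_d}$, $0\le a_i\le n$, and $\operatorname{Hom}_S(P^{[n]}_{S|A},S)$ has the dual basis, denoted $(\cdot)^\star$. The map $\gamma_n$ is the $S$-linear map sending $(y_0-x_0)^{a_0}\cdots(y_d-x_d)^{a_d}$ to $\big((y_0-x_0)^{n-a_0}\cdots(y_d-x_d)^{n-a_d}\big)^\star$. $P_{S|A}$ acts on $\operatorname{End}_A(S)$ and on $\operatorname{Hom}_S(P^{[n]}_{S|A},S)$ via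 $(s_1\otimes s_2)\cdot\delta=\tilde s_1\circ\delta\circ\tilde s_2$ (resp. the natural action). $D^{[n]}_{S|A}$ is the set of elements of $\operatorname{End}_A(S)$ annihilated by $\Delta^{[n+1]}_{S|A}$ under this action. $\varrho:S\to P^{[n]}_{S|A}$ is $s\mapsto 1\otimes s$, and $\varrho^*(\delta)=\delta\circ\varrho$. *)

theory Defs
  imports Main "HOL-Library.Poly_Mapping"
begin

text \<open>
  A = 'a (commutative ring), variables indexed by a finite type 'v with CARD('v) = d+1.
  S = A[x_i : i in 'v] is ('v =>0 nat) =>0 'a.
  P_{S|A} = S (x)_A S is identified (as in the statement) with the polynomial ring
  A[x,y] in the variables Inl i (= x_i = x_i (x) 1) and Inr i (= y_i = 1 (x) x_i).
\<close>

type_synonym ('a,'v) S = "('v \<Rightarrow>\<^sub>0 nat) \<Rightarrow>\<^sub>0 'a"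
type_synonym ('a,'v) P = "('v + 'v \<Rightarrow>\<^sub>0 nat) \<Rightarrow>\<^sub>0 'a"

definition Cst :: "'a::comm_ring_1 \<Rightarrow> ('m \<Rightarrow>\<^sub>0 nat) \<Rightarrow>\<^sub>0 'a" where
  "Cst c = Poly_Mapping.single 0 c"

definition Var :: "'m \<Rightarrow> ('m \<Rightarrow>\<^sub>0 nat) \<Rightarrow>\<^sub>0 'a::comm_ring_1" where
  "Var i = Poly_Mapping.single (Poly_Mapping.single i 1) 1"

definition SX :: "'v \<Rightarrow> ('a::comm_ring_1,'v) S" where "SX i = Var i"
definition PX :: "'v \<Rightarrow> ('a::comm_ring_1,'v) P" where "PX i = Var (Inl i)"
definition PY :: "'v \<Rightarrow> ('a::comm_ring_1,'v) P" where "PY i = Var (Inr i)"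

definition Smono :: "('v::finite \<Rightarrow> nat) \<Rightarrow> ('a::comm_ring_1,'v) S" where
  "Smono \<alpha> = (\<Prod>i\<in>UNIV. SX i ^ \<alpha> i)"

definition iota1 :: "('a::comm_ring_1,'v::finite) S \<Rightarrow> ('a,'v) P" where
  "iota1 s = (\<Sum>m\<in>Poly_Mapping.keys s. Cst (Poly_Mapping.lookup s m) * (\<Prod>i\<in>(UNIV::'v set). PX i ^ Poly_Mapping.lookup m i))"
definition iota2 :: "('a::comm_ring_1,'v::finite) S \<Rightarrow> ('a,'v) P" where
  "iota2 s = (\<Sum>m\<in>Poly_Mapping.keys s. Cst (Poly_Mapping.lookup s m) * (\<Prod>i\<in>(UNIV::'v set). PY i ^ Poly_Mapping.lookup m i))"

definition Delta :: "nat \<Rightarrow> ('a::comm_ring_1,'v::finite) P set" where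
  "Delta n = {\<Sum>i\<in>UNIV. c i * (PY i - PX i) ^ Suc n | c. True}"

text \<open>Top Koszul cohomology H^{d+1}(f; P) of the family f (indexed by the d+1 variables)
  with coefficients in P: the cokernel of the last Koszul differential, i.e. P/(f)P,
  represented by its cosets.\<close>
definition koszul_top :: "('v::finite \<Rightarrow> ('a::comm_ring_1,'v) P) \<Rightarrow> ('a,'v) P set set" where
  "koszul_top f = range (\<lambda>p. {q. q - p \<in> {\<Sum>i\<in>UNIV. f i * m i | m. True}})"

definition cls :: "nat \<Rightarrow> ('a::comm_ring_1,'v::finite) P \<Rightarrow> ('a,'v) P set" where
  "cls n p = {q. q - p \<in> Delta n}"
definition PQ :: "nat \<Rightarrow> ('a::comm_ring_1,'v::finite) P set set" where
  "PQ n = range (cls n)"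

definition qadd :: "('a::comm_ring_1,'v) P set \<Rightarrow> ('a,'v) P set \<Rightarrow> ('a,'v) P set" where
  "qadd \<xi> \<eta> = {p + q | p q. p \<in> \<xi> \<and> q \<in> \<eta>}"
definition qact :: "nat \<Rightarrow> ('a::comm_ring_1,'v::finite) P \<Rightarrow> ('a,'v) P set \<Rightarrow> ('a,'v) P set" where
  "qact n p \<xi> = (\<Union>q\<in>\<xi>. cls n (p * q))"
definition qsmult :: "nat \<Rightarrow> ('a::comm_ring_1,'v::finite) S \<Rightarrow> ('a,'v) P set \<Rightarrow> ('a,'v) P set" where
  "qsmult n s \<xi> = qact n (iota1 s) \<xi>"

definition HomS :: "nat \<Rightarrow> (('a::comm_ring_1,'v::finite) P set \<Rightarrow> ('a,'v) S) set" where
  "HomS n = {\<phi>. (\<forall>\<xi>\<in>PQ n. \<forall>\<eta>\<in>PQ n. \<phi> (qadd \<xi> \<eta>) = \<phi> \<xi> + \<phi> \<eta>)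
              \<and> (\<forall>s. \<forall>\<xi>\<in>PQ n. \<phi> (qsmult n s \<xi>) = s * \<phi> \<xi>)
              \<and> (\<forall>\<xi>. \<xi> \<notin> PQ n \<longrightarrow> \<phi> \<xi> = 0)}"

definition Hact :: "nat \<Rightarrow> ('a::comm_ring_1,'v::finite) P \<Rightarrow> (('a,'v) P set \<Rightarrow> ('a,'v) S)
                   \<Rightarrow> (('a,'v) P set \<Rightarrow> ('a,'v) S)" where
  "Hact n p \<phi> = (\<lambda>\<xi>. if \<xi> \<in> PQ n then \<phi> (qact n p \<xi>) else 0)"

text \<open>The S-basis (y_0-x_0)^{a_0}...(y_d-x_d)^{a_d}, 0 <= a_i <= n, of P^{[n]}.\<close>
definition bas :: "nat \<Rightarrow> ('v::finite \<Rightarrow> nat) \<Rightarrow> ('a::comm_ring_1,'v) P set" where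
  "bas n a = cls n (\<Prod>i\<in>UNIV. (PY i - PX i) ^ a i)"

definition idx :: "nat \<Rightarrow> ('v::finite \<Rightarrow> nat) set" where
  "idx n = {a. \<forall>i. a i \<le> n}"

definition dual :: "nat \<Rightarrow> ('v::finite \<Rightarrow> nat) \<Rightarrow> (('a::comm_ring_1,'v) P set \<Rightarrow> ('a,'v) S)" where
  "dual n a = (THE \<phi>. \<phi> \<in> HomS n \<and> (\<forall>c\<in>idx n. \<phi> (bas n c) = (if c = a then 1 else 0)))"

definition gamma :: "nat \<Rightarrow> ('a::comm_ring_1,'v::finite) P set \<Rightarrow> (('a,'v) P set \<Rightarrow> ('a,'v) S)" where
  "gamma n = (THE g. (\<forall>\<xi>\<in>PQ n. g \<xi> \<in> HomS n)
      \<and> (\<forall>\<xi>\<in>PQ n. \<forall>\<eta>\<in>PQ n. g (qadd \<xi> \<eta>) = (\<lambda>\<zeta>. g \<xi> \<zeta> + g \<eta> \<zeta>))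
      \<and> (\<forall>s. \<forall>\<xi>\<in>PQ n. g (qsmult n s \<xi>) = (\<lambda>\<zeta>. s * g \<xi> \<zeta>))
      \<and> (\<forall>a\<in>idx n. g (bas n a) = dual n (\<lambda>i. n - a i))
      \<and> (\<forall>\<xi>. \<xi> \<notin> PQ n \<longrightarrow> g \<xi> = (\<lambda>_. 0)))"

definition EndA :: "(('a::comm_ring_1,'v) S \<Rightarrow> ('a,'v) S) set" where
  "EndA = {\<delta>. (\<forall>f g. \<delta> (f + g) = \<delta> f + \<delta> g) \<and> (\<forall>c f. \<delta> (Cst c * f) = Cst c * \<delta> f)}"

text \<open>Action of P on End_A(S): (s1 (x) s2).delta = s1 o delta o s2, extended A-linearly;
  the monomial c x^alpha y^beta corresponds to c (x^alpha (x) x^beta).\<close>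
definition Pact :: "('a::comm_ring_1,'v::finite) P \<Rightarrow> (('a,'v) S \<Rightarrow> ('a,'v) S) \<Rightarrow> (('a,'v) S \<Rightarrow> ('a,'v) S)" where
  "Pact p \<delta> = (\<lambda>f. \<Sum>m\<in>Poly_Mapping.keys p. Cst (Poly_Mapping.lookup p m) * Smono (\<lambda>i. Poly_Mapping.lookup m (Inl i))
                               * \<delta> (Smono (\<lambda>i. Poly_Mapping.lookup m (Inr i)) * f))"

definition Dn :: "nat \<Rightarrow> (('a::comm_ring_1,'v::finite) S \<Rightarrow> ('a,'v) S) set" where
  "Dn n = {\<delta>\<in>EndA. \<forall>p\<in>Delta n. Pact p \<delta> = (\<lambda>_. 0)}"

definition rho :: "nat \<Rightarrow> ('a::comm_ring_1,'v::finite) S \<Rightarrow> ('a,'v) P set" where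
  "rho n s = cls n (iota2 s)"
definition rho_star :: "nat \<Rightarrow> (('a::comm_ring_1,'v::finite) P set \<Rightarrow> ('a,'v) S) \<Rightarrow> (('a,'v) S \<Rightarrow> ('a,'v) S)" where
  "rho_star n \<phi> = \<phi> \<circ> rho n"

end

theory Submission
  imports Defs
begin


section \<open>Basics on poly mappings\<close>

lemma pm_expand: "p = (\<Sum>m\<in>Poly_Mapping.keys p. Poly_Mapping.single m (Poly_Mapping.lookup p m))"
proof (rule poly_mapping_eqI)
  fix k
  show "Poly_Mapping.lookup p k = Poly_Mapping.lookup (\<Sum>m\<in>Poly_Mapping.keys p. Poly_Mapping.single m (Poly_Mapping.lookup p m)) k"
    by (simp add: lookup_sum lookup_single when_def in_keys_iff)
qed

lemma pm_induct[case_names zero single add]: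
  fixes p :: "'k \<Rightarrow>\<^sub>0 'b::comm_monoid_add"
  assumes "P 0" "\<And>m c. P (Poly_Mapping.single m c)" "\<And>p q. P p \<Longrightarrow> P q \<Longrightarrow> P (p+q)"
  shows "P p"
proof -
  have "\<And>K. finite K \<Longrightarrow> P (\<Sum>m\<in>K. Poly_Mapping.single m (Poly_Mapping.lookup p m))"
  proof -
    fix K :: "'k set" assume "finite K"
    then show "P (\<Sum>m\<in>K. Poly_Mapping.single m (Poly_Mapping.lookup p m))"
      by (induct K rule: finite_induct) (auto intro: assms)
  qed
  then show ?thesis by (subst pm_expand) simp
qed

definition mk :: "('m::finite \<Rightarrow> nat) \<Rightarrow> 'm \<Rightarrow>\<^sub>0 nat" where "mk e = Abs_poly_mapping e"

lemma lookup_mk[simp]: "Poly_Mapping.lookup (mk e) = e"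
  unfolding mk_def by simp

lemma mk_lookup[simp]: "mk (Poly_Mapping.lookup m) = m"
  by (rule poly_mapping_eqI) simp

lemma Cst_0[simp]: "Cst 0 = 0" by (simp add: Cst_def)
lemma Cst_1[simp]: "Cst 1 = 1" by (simp add: Cst_def)
lemma Cst_add: "Cst (a + b) = Cst a + Cst b" by (simp add: Cst_def single_add)
lemma Cst_mult: "Cst (a * b) = Cst a * Cst b" by (simp add: Cst_def mult_single)

lemma single_prod: "finite A \<Longrightarrow> (\<Prod>i\<in>A. Poly_Mapping.single (f i) (1::'a::comm_ring_1)) = Poly_Mapping.single (\<Sum>i\<in>A. f i) 1"
  by (induct A rule: finite_induct) (simp_all add: mult_single)

lemma single_Cst: "Poly_Mapping.single m c = Cst c * Poly_Mapping.single m (1::'a::comm_ring_1)"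
  by (simp add: Cst_def mult_single)

lemma Var_pow: "(Var i :: ('m \<Rightarrow>\<^sub>0 nat) \<Rightarrow>\<^sub>0 'a::comm_ring_1) ^ k = Poly_Mapping.single (Poly_Mapping.single i k) 1"
proof (induct k)
  case 0 then show ?case by simp
next
  case (Suc k) then show ?case by (simp add: Var_def mult_single single_add[symmetric])
qed



definition mon :: "('m::finite \<Rightarrow> 'r::comm_monoid_mult) \<Rightarrow> ('m \<Rightarrow>\<^sub>0 nat) \<Rightarrow> 'r" where
  "mon g m = (\<Prod>i\<in>UNIV. g i ^ Poly_Mapping.lookup m i)"

lemma mon_add: "mon g (m1 + m2) = mon g m1 * mon g m2"
  by (simp add: mon_def lookup_add power_add prod.distrib)

lemma mon_0[simp]: "mon g 0 = 1" by (simp add: mon_def)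

definition ev :: "('m::finite \<Rightarrow> ('n \<Rightarrow>\<^sub>0 nat) \<Rightarrow>\<^sub>0 'a::comm_ring_1) \<Rightarrow> (('m \<Rightarrow>\<^sub>0 nat) \<Rightarrow>\<^sub>0 'a) \<Rightarrow> ('n \<Rightarrow>\<^sub>0 nat) \<Rightarrow>\<^sub>0 'a" where
  "ev g p = (\<Sum>m\<in>Poly_Mapping.keys p. Cst (Poly_Mapping.lookup p m) * mon g m)"

lemma ev_add: "ev g (p + q) = ev g p + ev g q"
  unfolding ev_def
  by (rule setsum_keys_plus_distrib) (simp_all add: Cst_add distrib_right lookup_add)

lemma ev_0[simp]: "ev g 0 = 0" by (simp add: ev_def)

lemma ev_single: "ev g (Poly_Mapping.single m c) = Cst c * mon g m"
  by (simp add: ev_def)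

lemma ev_uminus: "ev g (- p) = - ev g p"
  using ev_add[of g p "-p"] by (simp add: eq_neg_iff_add_eq_0 add.commute)

lemma ev_diff: "ev g (p - q) = ev g p - ev g q"
  using ev_add[of g p "-q"] ev_uminus[of g q] by simp

lemma ev_sum: "ev g (\<Sum>x\<in>A. f x) = (\<Sum>x\<in>A. ev g (f x))"
  by (induct A rule: infinite_finite_induct) (simp_all add: ev_add)

lemma ev_mult: "ev g (p * q) = ev g p * ev g q"
proof (induct p rule: pm_induct)
  case zero then show ?case by simp
next
  case (add p1 p2) then show ?case by (simp add: distrib_right ev_add)
next
  case (single m c)
  show ?case
  proof (induct q rule: pm_induct)
    case zero then show ?case by simp
  next
    case (add q1 q2) then show ?case by (simp add: distrib_left ev_add)
  next
    case (single m2 c2)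
    then show ?case by (simp add: mult_single ev_single Cst_mult mon_add mult_ac)
  qed
qed

lemma ev_Cst[simp]: "ev g (Cst c) = Cst c"
  by (simp add: Cst_def ev_single mon_def)

lemma ev_1[simp]: "ev g 1 = 1"
  using ev_Cst[of g 1] by simp

lemma ev_Var[simp]: "ev g (Var i) = g i"
proof -
  have "mon g (Poly_Mapping.single i 1) = g i"
    unfolding mon_def
    by (subst prod.remove[of _ i]) (auto simp: lookup_single when_def intro!: prod.neutral)
  then show ?thesis by (simp add: Var_def ev_single)
qed

lemma ev_pow: "ev g (p ^ k) = ev g p ^ k"
  by (induct k) (simp_all add: ev_mult)

lemma ev_prod: "ev g (\<Prod>x\<in>A. f x) = (\<Prod>x\<in>A. ev g (f x))"
  by (induct A rule: infinite_finite_induct) (simp_all add: ev_mult)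

lemma mon_Var: "mon Var m = Poly_Mapping.single m (1::'a::comm_ring_1)"
proof -
  have "mon Var m = (\<Prod>i\<in>UNIV. Poly_Mapping.single (Poly_Mapping.single i (Poly_Mapping.lookup m i)) (1::'a))"
    by (simp add: mon_def Var_pow)
  also have "\<dots> = Poly_Mapping.single (\<Sum>i\<in>UNIV. Poly_Mapping.single i (Poly_Mapping.lookup m i)) 1"
    by (simp add: single_prod)
  also have "(\<Sum>i\<in>UNIV. Poly_Mapping.single i (Poly_Mapping.lookup m i)) = m"
  proof (rule poly_mapping_eqI)
    fix k show "Poly_Mapping.lookup (\<Sum>i\<in>UNIV. Poly_Mapping.single i (Poly_Mapping.lookup m i)) k = Poly_Mapping.lookup m k"
      by (simp add: lookup_sum lookup_single when_def)
  qed
  finally show ?thesis .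
qed

lemma ev_Var_id: "ev Var p = (p :: ('m::finite \<Rightarrow>\<^sub>0 nat) \<Rightarrow>\<^sub>0 'a::comm_ring_1)"
proof (induct p rule: pm_induct)
  case (single m c) then show ?case by (simp add: ev_single mon_Var single_Cst[symmetric])
qed (simp_all add: ev_add)

lemma hom_unique:
  assumes hadd: "\<And>p q. h (p + q) = h p + h q"
    and mult: "\<And>p q. h (p * q) = h p * h q"
    and cst: "\<And>c. h (Cst c) = Cst c"
    and var: "\<And>i. h (Var i) = g i"
  shows "h p = ev g (p :: ('m::finite \<Rightarrow>\<^sub>0 nat) \<Rightarrow>\<^sub>0 'a::comm_ring_1)"
proof (induct p rule: pm_induct)
  case zero
  have "h 0 = h 0 + h 0" using hadd[of 0 0] by simp
  then show ?case by simp
next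
  case (add p q) then show ?case by (simp add: hadd ev_add)
next
  case (single m c)
  have hp: "h (x ^ k) = h x ^ k" for x k
  proof (induct k)
    case 0 show ?case using cst[of 1] by simp
  next
    case (Suc k) then show ?case by (simp add: mult)
  qed
  have hpr: "h (\<Prod>i\<in>A. f i) = (\<Prod>i\<in>A. h (f i))" if "finite A" for A f
    using that
  proof (induct A rule: finite_induct)
    case empty show ?case using cst[of 1] by simp
  next
    case (insert x F) then show ?case by (simp add: mult)
  qed
  have "Poly_Mapping.single m c = Cst c * mon Var m"
    by (simp add: mon_Var single_Cst[symmetric])
  then have "h (Poly_Mapping.single m c) = Cst c * (\<Prod>i\<in>UNIV. g i ^ Poly_Mapping.lookup m i)"
    by (simp add: mult cst mon_def hpr hp var)
  then show ?case by (simp add: ev_single mon_def)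
qed



definition embL :: "('v::finite \<Rightarrow> nat) \<Rightarrow> ('v + 'v) \<Rightarrow>\<^sub>0 nat" where
  "embL e = (\<Sum>i\<in>UNIV. Poly_Mapping.single (Inl i) (e i))"
definition embR :: "('v::finite \<Rightarrow> nat) \<Rightarrow> ('v + 'v) \<Rightarrow>\<^sub>0 nat" where
  "embR e = (\<Sum>i\<in>UNIV. Poly_Mapping.single (Inr i) (e i))"

lemma lookup_embL[simp]: "Poly_Mapping.lookup (embL e) (Inl j) = e j" "Poly_Mapping.lookup (embL e) (Inr j) = 0"
  by (simp_all add: embL_def lookup_sum lookup_single when_def)
lemma lookup_embR[simp]: "Poly_Mapping.lookup (embR e) (Inr j) = e j" "Poly_Mapping.lookup (embR e) (Inl j) = 0"
  by (simp_all add: embR_def lookup_sum lookup_single when_def)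

lemma embL_add: "embL (\<lambda>i. e1 i + e2 i) = embL e1 + embL e2"
  by (rule poly_mapping_eqI) (case_tac k, simp_all add: lookup_add)
lemma embR_add: "embR (\<lambda>i. e1 i + e2 i) = embR e1 + embR e2"
  by (rule poly_mapping_eqI) (case_tac k, simp_all add: lookup_add)

definition xp :: "(('v::finite + 'v) \<Rightarrow>\<^sub>0 nat) \<Rightarrow> 'v \<Rightarrow> nat" where "xp m = (\<lambda>i. Poly_Mapping.lookup m (Inl i))"
definition yp :: "(('v::finite + 'v) \<Rightarrow>\<^sub>0 nat) \<Rightarrow> 'v \<Rightarrow> nat" where "yp m = (\<lambda>i. Poly_Mapping.lookup m (Inr i))"

lemma xp_add: "xp (m1 + m2) = (\<lambda>i. xp m1 i + xp m2 i)" by (simp add: xp_def lookup_add)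
lemma yp_add: "yp (m1 + m2) = (\<lambda>i. yp m1 i + yp m2 i)" by (simp add: yp_def lookup_add)
lemma xp_embL[simp]: "xp (embL e) = e" by (simp add: xp_def)
lemma yp_embL[simp]: "yp (embL e) = (\<lambda>_. 0)" by (simp add: yp_def)
lemma xp_embR[simp]: "xp (embR e) = (\<lambda>_. 0)" by (simp add: xp_def)
lemma yp_embR[simp]: "yp (embR e) = e" by (simp add: yp_def)
lemma embLR_split: "embL (xp m) + embR (yp m) = m"
  by (rule poly_mapping_eqI) (case_tac k, simp_all add: lookup_add xp_def yp_def)

lemma mon_Var_comp: "mon (\<lambda>i. Var (h i)) \<alpha> = Poly_Mapping.single (\<Sum>i\<in>UNIV. Poly_Mapping.single (h i) (Poly_Mapping.lookup \<alpha> i)) (1::'a::comm_ring_1)"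
  by (simp add: mon_def Var_pow single_prod)

lemma prod_PX: "(\<Prod>i\<in>UNIV. PX i ^ e i) = (Poly_Mapping.single (embL e) 1 :: ('a::comm_ring_1,'v::finite) P)"
  using mon_Var_comp[of Inl "mk e", where 'a='a] by (simp add: mon_def PX_def embL_def)
lemma prod_PY: "(\<Prod>i\<in>UNIV. PY i ^ e i) = (Poly_Mapping.single (embR e) 1 :: ('a::comm_ring_1,'v::finite) P)"
  using mon_Var_comp[of Inr "mk e", where 'a='a] by (simp add: mon_def PY_def embR_def)
lemma Smono_single: "Smono e = (Poly_Mapping.single (mk e) 1 :: ('a::comm_ring_1,'v::finite) S)"
  using mon_Var[of "mk e", where 'a='a] by (simp add: mon_def Smono_def SX_def)

lemma Smono_add: "Smono (\<lambda>i. e1 i + e2 i) = (Smono e1 * Smono e2 :: ('a::comm_ring_1,'v::finite) S)"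
  by (simp add: Smono_def power_add prod.distrib)
lemma Smono_0[simp]: "Smono (\<lambda>_. 0) = 1"
  by (simp add: Smono_def)

lemma iota1_ev: "iota1 = ev PX"
  by (simp add: fun_eq_iff iota1_def ev_def mon_def)
lemma iota2_ev: "iota2 = ev PY"
  by (simp add: fun_eq_iff iota2_def ev_def mon_def)

lemma iota1_single: "iota1 (Poly_Mapping.single \<alpha> c) = Poly_Mapping.single (embL (Poly_Mapping.lookup \<alpha>)) (c::'a::comm_ring_1)"
  by (simp add: iota1_ev ev_single mon_def prod_PX single_Cst[symmetric])
lemma iota2_single: "iota2 (Poly_Mapping.single \<alpha> c) = Poly_Mapping.single (embR (Poly_Mapping.lookup \<alpha>)) (c::'a::comm_ring_1)"
  by (simp add: iota2_ev ev_single mon_def prod_PY single_Cst[symmetric])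

lemma iota1_add: "iota1 (p + q) = iota1 p + iota1 q" by (simp add: iota1_ev ev_add)
lemma iota1_mult: "iota1 (p * q) = iota1 p * iota1 q" by (simp add: iota1_ev ev_mult)
lemma iota2_add: "iota2 (p + q) = iota2 p + iota2 q" by (simp add: iota2_ev ev_add)
lemma iota2_mult: "iota2 (p * q) = iota2 p * iota2 q" by (simp add: iota2_ev ev_mult)
lemma iota1_Cst[simp]: "iota1 (Cst c) = Cst c" by (simp add: iota1_ev)
lemma iota2_Cst[simp]: "iota2 (Cst c) = Cst c" by (simp add: iota2_ev)

lemma single_split: "Poly_Mapping.single m c = iota1 (Poly_Mapping.single (mk (xp m)) c) * iota2 (Poly_Mapping.single (mk (yp m)) (1::'a::comm_ring_1))"
  by (simp add: iota1_single iota2_single mult_single embLR_split)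

definition sg :: "'v::finite + 'v \<Rightarrow> ('a::comm_ring_1,'v) P" where
  "sg j = (case j of Inl i \<Rightarrow> PX i | Inr i \<Rightarrow> PY i + PX i)"
definition tg :: "'v::finite + 'v \<Rightarrow> ('a::comm_ring_1,'v) P" where
  "tg j = (case j of Inl i \<Rightarrow> PX i | Inr i \<Rightarrow> PY i - PX i)"

abbreviation "sig \<equiv> ev sg"
abbreviation "tau \<equiv> ev tg"

lemma sig_PX[simp]: "sig (PX i) = PX i" by (simp add: PX_def sg_def)
lemma sig_PY[simp]: "sig (PY i) = PY i + PX i" by (simp add: PY_def sg_def)
lemma tau_PX[simp]: "tau (PX i) = PX i" by (simp add: PX_def tg_def)
lemma tau_PY[simp]: "tau (PY i) = PY i - PX i" by (simp add: PY_def tg_def)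

lemma tau_sig: "tau (sig p) = p"
proof -
  have "tau (sig p) = ev Var p"
    by (rule hom_unique) (auto simp: ev_add ev_mult ev_diff sg_def tg_def PX_def PY_def split: sum.splits)
  then show ?thesis by (simp add: ev_Var_id)
qed

lemma sig_iota1: "sig (iota1 s) = iota1 s"
proof -
  have "sig (iota1 s) = ev PX s"
    by (rule hom_unique) (auto simp: ev_add ev_mult iota1_ev)
  then show ?thesis by (simp add: iota1_ev)
qed
lemma tau_iota1: "tau (iota1 s) = iota1 s"
proof -
  have "tau (iota1 s) = ev PX s"
    by (rule hom_unique) (auto simp: ev_add ev_mult iota1_ev)
  then show ?thesis by (simp add: iota1_ev)
qed

lemma sig_T[simp]: "sig (PY i - PX i) = PY i" by (simp add: ev_diff)



definition ycoef :: "('v::finite \<Rightarrow> nat) \<Rightarrow> ('a::comm_ring_1,'v) P \<Rightarrow> ('a,'v) S" where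
  "ycoef a q = (\<Sum>m\<in>Poly_Mapping.keys q. (if yp m = a then Poly_Mapping.single (mk (xp m)) (Poly_Mapping.lookup q m) else 0))"

lemma ycoef_add: "ycoef a (p + q) = ycoef a p + ycoef a q"
  unfolding ycoef_def
  by (rule setsum_keys_plus_distrib) (simp_all add: single_add lookup_add)

lemma ycoef_0[simp]: "ycoef a 0 = 0" by (simp add: ycoef_def)

lemma ycoef_single: "ycoef a (Poly_Mapping.single m c) = (if yp m = a then Poly_Mapping.single (mk (xp m)) c else 0)"
  by (simp add: ycoef_def)

lemma ycoef_sum: "ycoef a (\<Sum>x\<in>A. f x) = (\<Sum>x\<in>A. ycoef a (f x))"
  by (induct A rule: infinite_finite_induct) (simp_all add: ycoef_add)

lemma mk_add_lookup: "mk (\<lambda>i. Poly_Mapping.lookup \<alpha> i + f i) = \<alpha> + mk f"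
  by (rule poly_mapping_eqI) (simp add: lookup_add)

lemma ycoef_iota1: "ycoef a (iota1 s * q) = s * ycoef a q"
proof (induct s rule: pm_induct)
  case zero then show ?case by (simp add: iota1_ev)
next
  case (add p1 p2) then show ?case by (simp add: iota1_add distrib_right ycoef_add)
next
  case (single \<alpha> c)
  show ?case
  proof (induct q rule: pm_induct)
    case zero then show ?case by simp
  next
    case (add q1 q2) then show ?case by (simp add: distrib_left ycoef_add)
  next
    case (single m d)
    show ?case
      by (simp add: iota1_single mult_single ycoef_single yp_add xp_add mk_add_lookup)
  qed
qed

lemma PY_pow: "PY i ^ k = (Poly_Mapping.single (Poly_Mapping.single (Inr i) k) 1 :: ('a::comm_ring_1,'v::finite) P)"
  by (simp add: PY_def Var_pow)

lemma ycoef_PYpow: "a i \<le> n \<Longrightarrow> ycoef a (q * PY i ^ Suc n) = 0"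
proof (induct q rule: pm_induct)
  case zero then show ?case by simp
next
  case (add p q) then show ?case by (simp add: distrib_right ycoef_add)
next
  case (single m c)
  have "yp (m + Poly_Mapping.single (Inr i) (Suc n)) \<noteq> a"
  proof
    assume "yp (m + Poly_Mapping.single (Inr i) (Suc n)) = a"
    then have "yp (m + Poly_Mapping.single (Inr i) (Suc n)) i = a i" by simp
    then show False using single by (simp add: yp_def lookup_add)
  qed
  then show ?case by (subst PY_pow) (simp add: mult_single ycoef_single)
qed

lemma ycoef_prodPY: "ycoef a (\<Prod>i\<in>UNIV. PY i ^ b i) = (if b = a then 1 else (0::('a::comm_ring_1,'v::finite) S))"
proof -
  have "mk (\<lambda>_. 0) = (0 :: 'v \<Rightarrow>\<^sub>0 nat)" by (rule poly_mapping_eqI) simp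
  then show ?thesis by (simp add: prod_PY ycoef_single)
qed

definition Dl :: "nat \<Rightarrow> ('a::comm_ring_1,'v::finite) P set" where
  "Dl n = {\<Sum>i\<in>UNIV. c i * PY i ^ Suc n | c. True}"

lemma Dl_0: "0 \<in> Dl n" unfolding Dl_def by (rule CollectI, rule exI[of _ "\<lambda>_. 0"]) simp
lemma Dl_add: "p \<in> Dl n \<Longrightarrow> q \<in> Dl n \<Longrightarrow> p + q \<in> Dl n"
  unfolding Dl_def
  by (auto, rule_tac x="\<lambda>i. c i + ca i" in exI, simp add: distrib_right sum.distrib)

lemma idx_finite: "finite (idx n :: ('v::finite \<Rightarrow> nat) set)"
proof -
  have "idx n = {f. (\<forall>x. x \<in> (UNIV::'v set) \<longrightarrow> f x \<in> {..n}) \<and> (\<forall>x. x \<notin> UNIV \<longrightarrow> f x = 0)}"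
    by (auto simp: idx_def)
  then show ?thesis using finite_set_of_finite_funs[of "UNIV::'v set" "{..n}" 0] by simp
qed

definition yR :: "nat \<Rightarrow> ('a::comm_ring_1,'v::finite) P \<Rightarrow> ('a,'v) P" where
  "yR n q = (\<Sum>a\<in>idx n. iota1 (ycoef a q) * (\<Prod>i\<in>UNIV. PY i ^ a i))"

lemma yR_add: "yR n (p + q) = yR n p + yR n q"
  by (simp add: yR_def ycoef_add iota1_add distrib_right sum.distrib)

lemma ymem: "q - yR n q \<in> Dl n"
proof (induct q rule: pm_induct)
  case zero then show ?case by (simp add: yR_def iota1_ev Dl_0)
next
  case (add p q)
  have "p + q - yR n (p + q) = (p - yR n p) + (q - yR n q)" by (simp add: yR_add)
  then show ?case using add Dl_add by metis
next
  case (single m c)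
  show ?case
  proof (cases "yp m \<in> idx n")
    case True
    have "yR n (Poly_Mapping.single m c) = (\<Sum>a\<in>idx n. if a = yp m then iota1 (Poly_Mapping.single (mk (xp m)) c) * (\<Prod>i\<in>UNIV. PY i ^ a i) else 0)"
      unfolding yR_def by (rule sum.cong) (auto simp: ycoef_single iota1_ev)
    also have "\<dots> = iota1 (Poly_Mapping.single (mk (xp m)) c) * (\<Prod>i\<in>UNIV. PY i ^ yp m i)"
      by (subst sum.delta[OF idx_finite]) (simp add: True)
    also have "\<dots> = Poly_Mapping.single m c"
      by (simp add: iota1_single prod_PY mult_single embLR_split)
    finally show ?thesis by (simp add: Dl_0)
  next
    case False
    then obtain i where i: "n < yp m i" by (auto simp: idx_def not_le)
    have "yR n (Poly_Mapping.single m c) = 0"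
      unfolding yR_def using False by (intro sum.neutral) (auto simp: ycoef_single iota1_ev)
    moreover
    define m' where "m' = mk (\<lambda>j. Poly_Mapping.lookup m j - (if j = Inr i then Suc n else 0))"
    have "m' + Poly_Mapping.single (Inr i) (Suc n) = m"
      using i by (intro poly_mapping_eqI) (auto simp: m'_def lookup_add lookup_single when_def yp_def)
    then have sm: "Poly_Mapping.single m c = Poly_Mapping.single m' c * PY i ^ Suc n"
      by (subst PY_pow) (simp add: mult_single)
    have "Poly_Mapping.single m c = (\<Sum>j\<in>UNIV. (if j = i then Poly_Mapping.single m' c else 0) * PY j ^ Suc n)"
      by (simp add: sm if_distrib[where f="\<lambda>x. x * _"] sum.delta cong: if_cong)
    then have "Poly_Mapping.single m c \<in> Dl n"
      unfolding Dl_def mem_Collect_eq by (intro exI[of _ "\<lambda>j. if j = i then Poly_Mapping.single m' c else 0"]) simp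
    ultimately show ?thesis by simp
  qed
qed



lemma ycoef_uminus: "ycoef a (- p) = - ycoef a p"
  using ycoef_add[of a p "-p"] by (simp add: eq_neg_iff_add_eq_0 add.commute)
lemma ycoef_diff: "ycoef a (p - q) = ycoef a p - ycoef a q"
  using ycoef_add[of a p "-q"] ycoef_uminus[of a q] by simp

definition Tp :: "('v::finite \<Rightarrow> nat) \<Rightarrow> ('a::comm_ring_1,'v) P" where
  "Tp a = (\<Prod>i\<in>UNIV. (PY i - PX i) ^ a i)"

lemma bas_Tp: "bas n a = cls n (Tp a)" by (simp add: bas_def Tp_def)

definition coef :: "('v::finite \<Rightarrow> nat) \<Rightarrow> ('a::comm_ring_1,'v) P \<Rightarrow> ('a,'v) S" where
  "coef a p = ycoef a (sig p)"

lemma coef_add: "coef a (p + q) = coef a p + coef a q" by (simp add: coef_def ev_add ycoef_add)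
lemma coef_diff: "coef a (p - q) = coef a p - coef a q" by (simp add: coef_def ev_diff ycoef_diff)
lemma coef_0[simp]: "coef a 0 = 0" by (simp add: coef_def)
lemma coef_sum: "coef a (\<Sum>x\<in>A. f x) = (\<Sum>x\<in>A. coef a (f x))"
  by (simp add: coef_def ev_sum ycoef_sum)
lemma coef_iota1: "coef a (iota1 s * p) = s * coef a p"
  by (simp add: coef_def ev_mult sig_iota1 ycoef_iota1)

lemma sig_Tp: "sig (Tp b) = (\<Prod>i\<in>UNIV. PY i ^ b i)"
  by (simp add: Tp_def ev_prod ev_pow)
lemma tau_prodPY: "tau (\<Prod>i\<in>UNIV. PY i ^ b i) = Tp b"
  by (simp add: Tp_def ev_prod ev_pow)

lemma coef_Tp: "coef a (Tp b) = (if b = a then 1 else 0)"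
  by (simp add: coef_def sig_Tp ycoef_prodPY)

lemma Delta_0: "0 \<in> Delta n" unfolding Delta_def by (rule CollectI, rule exI[of _ "\<lambda>_. 0"]) simp
lemma Delta_add: "p \<in> Delta n \<Longrightarrow> q \<in> Delta n \<Longrightarrow> p + q \<in> Delta n"
  unfolding Delta_def
  by (auto, rule_tac x="\<lambda>i. c i + ca i" in exI, simp add: distrib_right sum.distrib)
lemma Delta_mult: "p \<in> Delta n \<Longrightarrow> r * p \<in> Delta n"
  unfolding Delta_def
  by (auto, rule_tac x="\<lambda>i. r * c i" in exI, simp add: sum_distrib_left mult_ac)
lemma Delta_uminus: "p \<in> Delta n \<Longrightarrow> - p \<in> Delta n"
  using Delta_mult[of p n "-1"] by simp
lemma Delta_diff: "p \<in> Delta n \<Longrightarrow> q \<in> Delta n \<Longrightarrow> p - q \<in> Delta n"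
  using Delta_add[of p n "-q"] Delta_uminus[of q n] by simp
lemma Delta_sum: "(\<And>x. x \<in> A \<Longrightarrow> f x \<in> Delta n) \<Longrightarrow> (\<Sum>x\<in>A. f x) \<in> Delta n"
  by (induct A rule: infinite_finite_induct) (simp_all add: Delta_0 Delta_add)

lemma coef_Delta:
  assumes "a \<in> idx n" "p \<in> Delta n"
  shows "coef a p = 0"
proof -
  from assms(2) obtain c where p: "p = (\<Sum>i\<in>UNIV. c i * (PY i - PX i) ^ Suc n)"
    unfolding Delta_def by blast
  have "coef a p = (\<Sum>i\<in>UNIV. ycoef a (sig (c i) * PY i ^ Suc n))"
    by (simp add: p coef_def ev_sum ev_mult ev_pow ycoef_sum)
  also have "\<dots> = 0"
    by (intro sum.neutral ballI ycoef_PYpow) (use assms(1) in \<open>simp add: idx_def\<close>)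
  finally show ?thesis .
qed

lemma Tp_Delta:
  fixes b :: "'v::finite \<Rightarrow> nat"
  assumes "b \<notin> idx n"
  shows "(Tp b :: ('a::comm_ring_1,'v) P) \<in> Delta n"
proof -
  from assms obtain i where i: "n < b i" by (auto simp: idx_def not_le)
  define r :: "('a,'v) P" where "r = (PY i - PX i) ^ (b i - Suc n) * (\<Prod>j\<in>UNIV - {i}. (PY j - PX j) ^ b j)"
  have "(Tp b :: ('a,'v) P) = (PY i - PX i) ^ b i * (\<Prod>j\<in>UNIV - {i}. (PY j - PX j) ^ b j)"
    unfolding Tp_def by (subst prod.remove[of _ i]) auto
  also have "(PY i - PX i) ^ b i = (PY i - PX i) ^ (Suc n + (b i - Suc n))"
    using i by simp
  also have "\<dots> = (PY i - PX i) ^ Suc n * (PY i - PX i) ^ (b i - Suc n)"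
    by (rule power_add)
  finally have e1: "(Tp b :: ('a,'v) P) = r * (PY i - PX i) ^ Suc n"
    by (simp add: r_def mult_ac)
  have "(\<Sum>j\<in>UNIV. (if j = i then r else 0) * (PY j - PX j) ^ Suc n) = (\<Sum>j\<in>UNIV. if j = i then r * (PY j - PX j) ^ Suc n else 0)"
    by (rule sum.cong) auto
  also have "\<dots> = r * (PY i - PX i) ^ Suc n" by simp
  finally have eq: "(Tp b :: ('a,'v) P) = (\<Sum>j\<in>UNIV. (if j = i then r else 0) * (PY j - PX j) ^ Suc n)"
    using e1 by simp
  show ?thesis unfolding Delta_def mem_Collect_eq by (rule exI[of _ "\<lambda>j. if j = i then r else 0"], rule conjI[OF eq TrueI])
qed

lemma decomp: "p - (\<Sum>a\<in>idx n. iota1 (coef a p) * Tp a) \<in> Delta n"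
proof -
  have "sig p - yR n (sig p) \<in> Dl n" by (rule ymem)
  then obtain c where c: "sig p - yR n (sig p) = (\<Sum>i\<in>UNIV. c i * PY i ^ Suc n)"
    unfolding Dl_def by blast
  have "tau (sig p - yR n (sig p)) = p - (\<Sum>a\<in>idx n. iota1 (coef a p) * Tp a)"
    by (simp add: ev_diff tau_sig yR_def ev_sum ev_mult tau_iota1 tau_prodPY coef_def)
  moreover have "tau (\<Sum>i\<in>UNIV. c i * PY i ^ Suc n) = (\<Sum>i\<in>UNIV. tau (c i) * (PY i - PX i) ^ Suc n)"
    by (simp add: ev_sum ev_mult ev_pow)
  ultimately have "p - (\<Sum>a\<in>idx n. iota1 (coef a p) * Tp a) = (\<Sum>i\<in>UNIV. tau (c i) * (PY i - PX i) ^ Suc n)"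
    using c by simp
  then show ?thesis unfolding Delta_def mem_Collect_eq by (intro exI[of _ "\<lambda>i. tau (c i)"]) simp
qed

lemma coef_lin:
  assumes "a \<in> idx n"
  shows "coef a (\<Sum>b\<in>idx n. iota1 (s b) * Tp b) = s a"
proof -
  have "coef a (\<Sum>b\<in>idx n. iota1 (s b) * Tp b) = (\<Sum>b\<in>idx n. s b * coef a (Tp b))"
    by (simp add: coef_sum coef_iota1)
  also have "\<dots> = (\<Sum>b\<in>idx n. if b = a then s b else 0)"
    by (rule sum.cong) (simp_all add: coef_Tp)
  also have "\<dots> = s a" by (subst sum.delta[OF idx_finite]) (simp add: assms)
  finally show ?thesis .
qed

section \<open>Cosets\<close>

lemma cls_eq_iff: "cls n p = cls n q \<longleftrightarrow> p - q \<in> Delta n"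
proof
  assume "cls n p = cls n q"
  moreover have "p \<in> cls n p" by (simp add: cls_def Delta_0)
  ultimately show "p - q \<in> Delta n" by (simp add: cls_def)
next
  assume h: "p - q \<in> Delta n"
  have "x - p \<in> Delta n \<longleftrightarrow> x - q \<in> Delta n" for x
  proof
    assume a: "x - p \<in> Delta n"
    have "x - q = (x - p) + (p - q)" by simp
    then show "x - q \<in> Delta n" using Delta_add[OF a h] by simp
  next
    assume a: "x - q \<in> Delta n"
    have "x - p = (x - q) - (p - q)" by simp
    then show "x - p \<in> Delta n" using Delta_diff[OF a h] by simp
  qed
  then show "cls n p = cls n q" by (simp add: cls_def)
qed

lemma cls_in[simp]: "cls n p \<in> PQ n" by (simp add: PQ_def)
lemma PQ_E: "\<xi> \<in> PQ n \<Longrightarrow> (\<And>p. \<xi> = cls n p \<Longrightarrow> thesis) \<Longrightarrow> thesis"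
  by (auto simp: PQ_def)

lemma qadd_cls: "qadd (cls n p) (cls n q) = cls n (p + q)"
proof (rule set_eqI)
  fix x
  show "x \<in> qadd (cls n p) (cls n q) \<longleftrightarrow> x \<in> cls n (p + q)"
  proof
    assume "x \<in> cls n (p + q)"
    then have h: "x - (p + q) \<in> Delta n" by (simp add: cls_def)
    have "x - q - p = x - (p + q)" by simp
    then have "x - q \<in> cls n p" using h unfolding cls_def by (metis mem_Collect_eq)
    moreover have "q \<in> cls n q" by (simp add: cls_def Delta_0)
    moreover have "x = (x - q) + q" by simp
    ultimately show "x \<in> qadd (cls n p) (cls n q)" unfolding qadd_def by blast
  next
    assume "x \<in> qadd (cls n p) (cls n q)"
    then obtain a b where ab: "x = a + b" "a - p \<in> Delta n" "b - q \<in> Delta n"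
      unfolding qadd_def cls_def by blast
    have "x - (p + q) = (a - p) + (b - q)" using ab(1) by simp
    then show "x \<in> cls n (p + q)" using Delta_add[OF ab(2,3)] unfolding cls_def by (metis mem_Collect_eq)
  qed
qed

lemma qact_cls: "qact n r (cls n p) = cls n (r * p)"
proof -
  have "cls n (r * q) = cls n (r * p)" if "q \<in> cls n p" for q
  proof -
    have "r * (q - p) \<in> Delta n" using that by (simp add: cls_def Delta_mult)
    moreover have "r * q - r * p = r * (q - p)" by (simp add: right_diff_distrib)
    ultimately show ?thesis by (simp add: cls_eq_iff)
  qed
  then have "qact n r (cls n p) = (\<Union>q\<in>cls n p. cls n (r * p))"
    unfolding qact_def by (rule SUP_cong[OF refl])
  moreover have "p \<in> cls n p" by (simp add: cls_def Delta_0)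
  ultimately show ?thesis by (auto simp only: SUP_constant split: if_splits)
qed

lemma qsmult_cls: "qsmult n s (cls n p) = cls n (iota1 s * p)"
  by (simp add: qsmult_def qact_cls)

lemma cls_decomp: "cls n p = cls n (\<Sum>a\<in>idx n. iota1 (coef a p) * Tp a)"
  using decomp by (simp add: cls_eq_iff)



definition islin :: "nat \<Rightarrow> (('a::comm_ring_1,'v::finite) P set \<Rightarrow> ('a,'v) S) \<Rightarrow> bool" where
  "islin n F \<longleftrightarrow> (\<forall>\<xi>\<in>PQ n. \<forall>\<eta>\<in>PQ n. F (qadd \<xi> \<eta>) = F \<xi> + F \<eta>) \<and> (\<forall>s. \<forall>\<xi>\<in>PQ n. F (qsmult n s \<xi>) = s * F \<xi>)"

lemma HomS_iff: "\<phi> \<in> HomS n \<longleftrightarrow> islin n \<phi> \<and> (\<forall>\<xi>. \<xi> \<notin> PQ n \<longrightarrow> \<phi> \<xi> = 0)"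
  by (simp add: HomS_def islin_def)

lemma lin_cls_add: "islin n F \<Longrightarrow> F (cls n (p + q)) = F (cls n p) + F (cls n q)"
  by (simp add: islin_def qadd_cls[symmetric])

lemma lin_cls_0: "islin n F \<Longrightarrow> F (cls n 0) = 0"
  using lin_cls_add[of n F 0 0] by simp

lemma lin_cls_iota1: "islin n F \<Longrightarrow> F (cls n (iota1 s * p)) = s * F (cls n p)"
  by (simp add: islin_def qsmult_cls[symmetric])

lemma lin_cls_sum: "islin n F \<Longrightarrow> F (cls n (\<Sum>x\<in>A. f x)) = (\<Sum>x\<in>A. F (cls n (f x)))"
  by (induct A rule: infinite_finite_induct) (simp_all add: lin_cls_0 lin_cls_add)

lemma lin_span: "islin n F \<Longrightarrow> F (cls n p) = (\<Sum>a\<in>idx n. coef a p * F (bas n a))"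
  by (subst cls_decomp) (simp add: lin_cls_sum lin_cls_iota1 bas_Tp)

lemma lin_eq:
  assumes "islin n F" "islin n G" "\<And>a. a \<in> idx n \<Longrightarrow> F (bas n a) = G (bas n a)" "\<xi> \<in> PQ n"
  shows "F \<xi> = G \<xi>"
proof -
  from assms(4) obtain p where "\<xi> = cls n p" by (rule PQ_E)
  then show ?thesis using assms(1-3) by (simp add: lin_span)
qed

lemma HomS_eq:
  assumes "\<phi> \<in> HomS n" "\<psi> \<in> HomS n" "\<And>a. a \<in> idx n \<Longrightarrow> \<phi> (bas n a) = \<psi> (bas n a)"
  shows "\<phi> = \<psi>"
proof
  fix \<xi> show "\<phi> \<xi> = \<psi> \<xi>"
    using assms lin_eq[of n \<phi> \<psi> \<xi>] by (cases "\<xi> \<in> PQ n") (auto simp: HomS_iff)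
qed

definition lift :: "nat \<Rightarrow> (('a::comm_ring_1,'v::finite) P \<Rightarrow> ('a,'v) S) \<Rightarrow> ('a,'v) P set \<Rightarrow> ('a,'v) S" where
  "lift n f \<xi> = (if \<xi> \<in> PQ n then f (SOME p. \<xi> = cls n p) else 0)"

definition resp :: "nat \<Rightarrow> (('a::comm_ring_1,'v::finite) P \<Rightarrow> ('a,'v) S) \<Rightarrow> bool" where
  "resp n f \<longleftrightarrow> (\<forall>p q. p - q \<in> Delta n \<longrightarrow> f p = f q)"

lemma lift_cls: "resp n f \<Longrightarrow> lift n f (cls n p) = f p"
proof -
  assume r: "resp n f"
  have "cls n p = cls n (SOME q. cls n p = cls n q)" by (rule someI) (rule refl)
  then have "(SOME q. cls n p = cls n q) - p \<in> Delta n" by (metis cls_eq_iff)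
  then show ?thesis using r by (simp add: lift_def resp_def)
qed

lemma lift_HomS:
  assumes "resp n f" "\<And>p q. f (p + q) = f p + f q" "\<And>s p. f (iota1 s * p) = s * f p"
  shows "lift n f \<in> HomS n"
  unfolding HomS_def using assms
  by (auto elim!: PQ_E simp: qadd_cls qsmult_cls lift_cls) (simp add: lift_def)

lemma coef_resp: "a \<in> idx n \<Longrightarrow> resp n (coef a)"
  unfolding resp_def by (metis coef_Delta coef_diff eq_iff_diff_eq_0)

lemma dual_eq:
  assumes "b \<in> idx n"
  shows "dual n b = lift n (coef b)"
  unfolding dual_def
proof (rule the_equality)
  have "lift n (coef b) \<in> HomS n"
    by (rule lift_HomS) (simp_all add: coef_resp assms coef_add coef_iota1)
  moreover have "\<forall>c\<in>idx n. lift n (coef b) (bas n c) = (if c = b then 1 else 0)"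
    by (simp add: bas_Tp lift_cls coef_resp assms coef_Tp)
  ultimately show "lift n (coef b) \<in> HomS n \<and> (\<forall>c\<in>idx n. lift n (coef b) (bas n c) = (if c = b then 1 else 0))" by blast
next
  fix \<phi> assume h: "\<phi> \<in> HomS n \<and> (\<forall>c\<in>idx n. \<phi> (bas n c) = (if c = b then 1 else 0))"
  have "lift n (coef b) \<in> HomS n"
    by (rule lift_HomS) (simp_all add: coef_resp assms coef_add coef_iota1)
  then show "\<phi> = lift n (coef b)"
    using h by (intro HomS_eq) (auto simp: bas_Tp lift_cls coef_resp assms coef_Tp)
qed

lemma dual_bas: "b \<in> idx n \<Longrightarrow> c \<in> idx n \<Longrightarrow> dual n b (bas n c) = (if c = b then 1 else 0)"
  by (simp add: dual_eq bas_Tp lift_cls coef_resp coef_Tp)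

lemma dual_HomS: "b \<in> idx n \<Longrightarrow> dual n b \<in> HomS n"
  by (simp add: dual_eq) (rule lift_HomS, simp_all add: coef_resp coef_add coef_iota1)



lemma Pact_add: "Pact (p + q) \<delta> f = Pact p \<delta> f + Pact q \<delta> f"
  unfolding Pact_def
  by (rule setsum_keys_plus_distrib) (simp_all add: Cst_add distrib_right lookup_add)

lemma Pact_0[simp]: "Pact 0 \<delta> f = 0" by (simp add: Pact_def)

lemma Pact_single: "Pact (Poly_Mapping.single m c) \<delta> f = Cst c * Smono (xp m) * \<delta> (Smono (yp m) * f)"
  by (simp add: Pact_def xp_def yp_def)

lemma Pact_uminus: "Pact (- p) \<delta> f = - Pact p \<delta> f"
  using Pact_add[of p "-p" \<delta> f] by (simp add: eq_neg_iff_add_eq_0 add.commute)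
lemma Pact_diff: "Pact (p - q) \<delta> f = Pact p \<delta> f - Pact q \<delta> f"
  using Pact_add[of p "-q" \<delta> f] Pact_uminus[of q \<delta> f] by simp

lemma EndA_0: "\<delta> \<in> EndA \<Longrightarrow> \<delta> 0 = 0"
proof -
  assume "\<delta> \<in> EndA"
  then have "\<delta> (0 + 0) = \<delta> 0 + \<delta> 0" unfolding EndA_def by blast
  then show ?thesis by simp
qed

lemma Smono_lookup: "Smono (Poly_Mapping.lookup \<alpha>) = (Poly_Mapping.single \<alpha> 1 :: ('a::comm_ring_1,'v::finite) S)"
  by (simp add: Smono_single)

lemma Pact_iota2: "\<delta> \<in> EndA \<Longrightarrow> Pact (iota2 t) \<delta> f = \<delta> (t * f)"
proof (induct t rule: pm_induct)
  case zero then show ?case by (simp add: iota2_ev EndA_0)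
next
  case (add p q) then show ?case by (simp add: iota2_add Pact_add distrib_right EndA_def)
next
  case (single \<beta> c)
  have "\<delta> (Poly_Mapping.single \<beta> c * f) = \<delta> (Cst c * (Poly_Mapping.single \<beta> 1 * f))"
    by (subst single_Cst) (simp only: mult.assoc)
  also have "\<dots> = Cst c * \<delta> (Poly_Mapping.single \<beta> 1 * f)" using single by (simp add: EndA_def)
  also have "\<dots> = Cst c * Smono (xp (embR (Poly_Mapping.lookup \<beta>))) * \<delta> (Smono (yp (embR (Poly_Mapping.lookup \<beta>))) * f)"
    by (simp only: xp_embR yp_embR Smono_0 Smono_lookup mult_1_right)
  also have "\<dots> = Pact (iota2 (Poly_Mapping.single \<beta> c)) \<delta> f"
    by (simp only: iota2_single Pact_single)
  finally show ?case by simp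
qed

lemma Pact_iota1:
  assumes add: "\<And>f g. \<delta> (f + g) = \<delta> f + \<delta> g"
  shows "Pact (iota1 s * p) \<delta> f = s * Pact p \<delta> f"
proof (induct s rule: pm_induct)
  case zero then show ?case by (simp add: iota1_ev)
next
  case (add p1 p2) then show ?case by (simp add: iota1_add distrib_right Pact_add)
next
  case (single \<alpha> c)
  show ?case
  proof (induct p rule: pm_induct)
    case zero then show ?case by simp
  next
    case (add q1 q2) then show ?case by (simp add: distrib_left Pact_add)
  next
    case (single m d)
    have e1: "iota1 (Poly_Mapping.single \<alpha> c) * Poly_Mapping.single m d = Poly_Mapping.single (embL (Poly_Mapping.lookup \<alpha>) + m) (c * d)"
      by (simp only: iota1_single mult_single)
    have e2: "Smono (xp (embL (Poly_Mapping.lookup \<alpha>) + m)) = Poly_Mapping.single \<alpha> 1 * Smono (xp m)"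
      by (simp only: xp_add xp_embL Smono_add Smono_lookup)
    have e3: "yp (embL (Poly_Mapping.lookup \<alpha>) + m) = yp m"
      by (simp add: yp_add)
    have e4: "Poly_Mapping.single \<alpha> c = Cst c * Poly_Mapping.single \<alpha> 1" by (rule single_Cst)
    have "Pact (iota1 (Poly_Mapping.single \<alpha> c) * Poly_Mapping.single m d) \<delta> f
      = Cst (c * d) * Smono (xp (embL (Poly_Mapping.lookup \<alpha>) + m)) * \<delta> (Smono (yp (embL (Poly_Mapping.lookup \<alpha>) + m)) * f)"
      by (simp only: e1 Pact_single)
    also have "\<dots> = Poly_Mapping.single \<alpha> c * (Cst d * Smono (xp m) * \<delta> (Smono (yp m) * f))"
      by (simp only: e2 e3 e4 Cst_mult mult_ac)
    also have "\<dots> = Poly_Mapping.single \<alpha> c * Pact (Poly_Mapping.single m d) \<delta> f"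
      by (simp only: Pact_single)
    finally show ?case .
  qed
qed

lemma rho_star_cls: "rho_star n \<phi> f = \<phi> (cls n (iota2 f))"
  by (simp add: rho_star_def rho_def)

lemma rho_EndA: "\<phi> \<in> HomS n \<Longrightarrow> rho_star n \<phi> \<in> EndA"
  unfolding EndA_def
  by (auto simp: rho_star_cls iota2_add HomS_iff lin_cls_add)
     (metis iota1_Cst iota2_Cst iota2_mult lin_cls_iota1)

lemma rho_Hact_aux:
  assumes "\<phi> \<in> HomS n"
  shows "\<phi> (cls n (p * iota2 f)) = Pact p (rho_star n \<phi>) f"
proof -
  have L: "islin n \<phi>" using assms by (simp add: HomS_iff)
  show ?thesis
  proof (induct p arbitrary: f rule: pm_induct)
    case zero then show ?case using L by (simp add: lin_cls_0)
  next
    case (add p q) then show ?case using L by (simp add: distrib_right lin_cls_add Pact_add)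
  next
    case (single m c)
    have "\<phi> (cls n (Poly_Mapping.single m c * iota2 f))
        = \<phi> (cls n (iota1 (Poly_Mapping.single (mk (xp m)) c) * iota2 (Poly_Mapping.single (mk (yp m)) 1 * f)))"
      by (subst single_split) (simp add: iota2_mult mult.assoc)
    also have "\<dots> = Poly_Mapping.single (mk (xp m)) c * \<phi> (cls n (iota2 (Poly_Mapping.single (mk (yp m)) 1 * f)))"
      using L by (simp add: lin_cls_iota1)
    also have "\<dots> = Pact (Poly_Mapping.single m c) (rho_star n \<phi>) f"
      by (simp add: Pact_single rho_star_cls Smono_single single_Cst[of "mk (xp m)" c])
    finally show ?case .
  qed
qed

lemma Hact_cls: "Hact n p \<phi> (cls n q) = \<phi> (cls n (p * q))"
  by (simp add: Hact_def qact_cls)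

lemma rho_Hact: "\<phi> \<in> HomS n \<Longrightarrow> rho_star n (Hact n p \<phi>) = Pact p (rho_star n \<phi>)"
  by (rule ext) (simp add: rho_star_cls Hact_cls rho_Hact_aux)

lemma rho_Dn: "\<phi> \<in> HomS n \<Longrightarrow> rho_star n \<phi> \<in> Dn n"
proof -
  assume h: "\<phi> \<in> HomS n"
  have "Pact p (rho_star n \<phi>) = (\<lambda>_. 0)" if "p \<in> Delta n" for p
  proof
    fix f
    have "cls n (p * iota2 f) = cls n 0" using that Delta_mult[of p n "iota2 f"]
      by (simp add: cls_eq_iff mult.commute)
    then show "Pact p (rho_star n \<phi>) f = 0"
      using h rho_Hact_aux[OF h, of p f] by (simp add: HomS_iff lin_cls_0)
  qed
  then show ?thesis using rho_EndA[OF h] by (simp add: Dn_def)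
qed

lemma rho_inj:
  assumes "\<phi> \<in> HomS n" "\<psi> \<in> HomS n" "rho_star n \<phi> = rho_star n \<psi>"
  shows "\<phi> = \<psi>"
proof
  fix \<xi>
  have L: "islin n \<phi>" "islin n \<psi>" using assms by (simp_all add: HomS_iff)
  have "\<phi> (cls n p) = \<psi> (cls n p)" for p
  proof (induct p rule: pm_induct)
    case zero then show ?case using L by (simp add: lin_cls_0)
  next
    case (add p q) then show ?case using L by (simp add: lin_cls_add)
  next
    case (single m c)
    have "rho_star n \<phi> (Poly_Mapping.single (mk (yp m)) 1) = rho_star n \<psi> (Poly_Mapping.single (mk (yp m)) 1)"
      using assms(3) by simp
    then show ?case using L
      by (subst (1 2) single_split) (simp add: lin_cls_iota1 rho_star_cls)
  qed
  then show "\<phi> \<xi> = \<psi> \<xi>" using assms(1,2)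
    by (cases "\<xi> \<in> PQ n") (auto elim: PQ_E simp: HomS_iff)
qed

lemma rho_surj:
  fixes \<delta> :: "('a::comm_ring_1,'v::finite) S \<Rightarrow> ('a,'v) S"
  assumes "\<delta> \<in> Dn n"
  shows "\<exists>\<phi>\<in>HomS n. rho_star n \<phi> = \<delta>"
proof -
  have E: "\<delta> \<in> EndA" and Z: "\<And>p. p \<in> Delta n \<Longrightarrow> Pact p \<delta> = (\<lambda>_. 0)" using assms by (auto simp: Dn_def)
  have ad: "\<And>f g. \<delta> (f + g) = \<delta> f + \<delta> g" using E by (simp add: EndA_def)
  have R: "resp n (\<lambda>p. Pact p \<delta> 1)"
    unfolding resp_def
  proof (intro allI impI)
    fix p q :: "('a,'v) P" assume "p - q \<in> Delta n"
    then have "Pact (p - q) \<delta> 1 = 0" using Z by simp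
    then show "Pact p \<delta> 1 = Pact q \<delta> 1" by (simp add: Pact_diff)
  qed
  have H: "lift n (\<lambda>p. Pact p \<delta> 1) \<in> HomS n"
    by (rule lift_HomS[OF R]) (simp_all add: Pact_add Pact_iota1[OF ad])
  moreover have "rho_star n (lift n (\<lambda>p. Pact p \<delta> 1)) = \<delta>"
    by (rule ext) (simp add: rho_star_cls lift_cls[OF R] Pact_iota2[OF E])
  ultimately show ?thesis by blast
qed

lemma rho_bij: "bij_betw (rho_star n) (HomS n) (Dn n)"
  unfolding bij_betw_def
proof
  show "inj_on (rho_star n) (HomS n)" by (rule inj_onI) (rule rho_inj)
  show "rho_star n ` HomS n = Dn n"
    using rho_Dn rho_surj by blast
qed



abbreviation NN :: "nat \<Rightarrow> 'v \<Rightarrow> nat" where "NN n \<equiv> (\<lambda>_. n)"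

lemma NN_idx[simp]: "NN n \<in> idx n" by (simp add: idx_def)

definition rep :: "nat \<Rightarrow> ('a::comm_ring_1,'v::finite) P set \<Rightarrow> ('a,'v) P" where
  "rep n \<xi> = (SOME p. \<xi> = cls n p)"

definition G :: "nat \<Rightarrow> ('a::comm_ring_1,'v::finite) P set \<Rightarrow> (('a,'v) P set \<Rightarrow> ('a,'v) S)" where
  "G n \<xi> = (if \<xi> \<in> PQ n then lift n (\<lambda>q. coef (NN n) (rep n \<xi> * q)) else (\<lambda>_. 0))"

lemma resp_pair: "resp n (\<lambda>q. coef (NN n) ((p :: ('a::comm_ring_1,'v::finite) P) * q))"
  unfolding resp_def
proof (intro allI impI)
  fix q q' :: "('a,'v) P" assume "q - q' \<in> Delta n"
  then have "p * q - p * q' \<in> Delta n" using Delta_mult[of "q - q'" n p] by (simp add: right_diff_distrib)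
  then have "coef (NN n) (p * q - p * q') = 0" by (rule coef_Delta[OF NN_idx])
  then show "coef (NN n) (p * q) = coef (NN n) (p * q')" by (simp add: coef_diff)
qed

lemma G_cls: "G n (cls n p) = lift n (\<lambda>q. coef (NN n) (p * q))"
proof
  fix \<zeta>
  have c: "cls n p = cls n (rep n (cls n p))" unfolding rep_def by (rule someI) (rule refl)
  show "G n (cls n p) \<zeta> = lift n (\<lambda>q. coef (NN n) (p * q)) \<zeta>"
  proof (cases "\<zeta> \<in> PQ n")
    case True
    then obtain r where r: "\<zeta> = cls n r" by (rule PQ_E)
    have "p - rep n (cls n p) \<in> Delta n" using c by (simp add: cls_eq_iff)
    then have "- (p - rep n (cls n p)) \<in> Delta n" by (rule Delta_uminus)
    then have "r * (- (p - rep n (cls n p))) \<in> Delta n" by (rule Delta_mult)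
    moreover have "r * (- (p - rep n (cls n p))) = rep n (cls n p) * r - p * r" by (simp add: algebra_simps)
    ultimately have "rep n (cls n p) * r - p * r \<in> Delta n" by simp
    then have "coef (NN n) (rep n (cls n p) * r - p * r) = 0" by (rule coef_Delta[OF NN_idx])
    then show ?thesis by (simp add: G_def r lift_cls resp_pair coef_diff)
  next
    case False then show ?thesis by (simp add: G_def lift_def)
  qed
qed

lemma G_cls_cls: "G n (cls n p) (cls n q) = coef (NN n) (p * q)"
  by (simp add: G_cls lift_cls resp_pair)

lemma G_notin: "\<zeta> \<notin> PQ n \<Longrightarrow> G n \<xi> \<zeta> = 0"
  by (simp add: G_def lift_def)

lemma G_HomS: "G n (cls n (p :: ('a::comm_ring_1,'v::finite) P)) \<in> HomS n"
  unfolding G_cls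
proof (rule lift_HomS)
  show "resp n (\<lambda>q. coef (NN n) (p * q))" by (rule resp_pair)
  show "coef (NN n) (p * (q + r)) = coef (NN n) (p * q) + coef (NN n) (p * r)" for q r :: "('a,'v) P"
    by (simp add: distrib_left coef_add)
  show "coef (NN n) (p * (iota1 s * q)) = s * coef (NN n) (p * q)" for s :: "('a,'v) S" and q :: "('a,'v) P"
  proof -
    have "p * (iota1 s * q) = iota1 s * (p * q)" by (simp add: mult_ac)
    then show ?thesis by (simp only: coef_iota1)
  qed
qed

lemma G_lin: "islin n (\<lambda>\<xi>. G n \<xi> \<zeta>)"
proof (cases "\<zeta> \<in> PQ n")
  case True
  then obtain r where r: "\<zeta> = cls n r" by (rule PQ_E)
  show ?thesis unfolding islin_def
    by (auto elim!: PQ_E simp: r qadd_cls qsmult_cls G_cls_cls distrib_right coef_add coef_iota1 mult.assoc)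
next
  case False then show ?thesis by (simp add: islin_def G_notin)
qed

lemma Tp_mult: "Tp a * Tp b = Tp (\<lambda>i. a i + b i)"
  by (simp add: Tp_def power_add prod.distrib)

lemma G_bas_bas: "G n (bas n a) (bas n c) = (if (\<lambda>i. a i + c i) = NN n then 1 else 0)"
proof (cases "(\<lambda>i. a i + c i) \<in> idx n")
  case True
  then show ?thesis by (simp add: bas_Tp G_cls_cls Tp_mult coef_Tp eq_commute)
next
  case False
  then have "(\<lambda>i. a i + c i) \<noteq> NN n" by auto
  moreover have "coef (NN n) (Tp (\<lambda>i. a i + c i)) = 0"
    using False by (intro coef_Delta Tp_Delta) simp_all
  ultimately show ?thesis by (simp add: bas_Tp G_cls_cls Tp_mult)
qed

lemma compl_idx: "a \<in> idx n \<Longrightarrow> (\<lambda>i. n - a i) \<in> idx n" by (simp add: idx_def)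

lemma compl_eq: "a \<in> idx n \<Longrightarrow> c \<in> idx n \<Longrightarrow> ((\<lambda>i. a i + c i) = NN n) = (c = (\<lambda>i. n - a i))"
proof -
  assume "a \<in> idx n" "c \<in> idx n"
  then have "\<forall>i. a i \<le> n" "\<forall>i. c i \<le> n" by (auto simp: idx_def)
  then show ?thesis by (auto simp: fun_eq_iff) (metis add_diff_cancel_left')
qed

lemma G_bas: "a \<in> idx n \<Longrightarrow> G n (bas n a) = dual n (\<lambda>i. n - a i)"
  apply (rule HomS_eq[where n=n])
    apply (simp add: bas_Tp G_HomS)
   apply (simp add: dual_HomS compl_idx)
  apply (simp add: G_bas_bas dual_bas compl_idx compl_eq)
  done

lemma gamma_eq: "gamma n = (G n :: ('a::comm_ring_1,'v::finite) P set \<Rightarrow> _)"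
  unfolding gamma_def
proof (rule the_equality, intro conjI)
  show "\<forall>\<xi>\<in>PQ n. G n \<xi> \<in> HomS n" by (auto elim!: PQ_E simp: G_HomS)
  show "\<forall>\<xi>\<in>PQ n. \<forall>\<eta>\<in>PQ n. G n (qadd \<xi> \<eta>) = (\<lambda>\<zeta>. G n \<xi> \<zeta> + G n \<eta> \<zeta>)"
    apply (intro ballI ext) using G_lin unfolding islin_def by blast
  show "\<forall>s. \<forall>\<xi>\<in>PQ n. G n (qsmult n s \<xi>) = (\<lambda>\<zeta>. s * G n \<xi> \<zeta>)"
    apply (intro allI ballI ext) using G_lin unfolding islin_def by blast
  show "\<forall>a\<in>idx n. G n (bas n a) = dual n (\<lambda>i. n - a i)" by (simp add: G_bas)
  show "\<forall>\<xi>. \<xi> \<notin> PQ n \<longrightarrow> G n \<xi> = (\<lambda>_. 0)" by (simp add: G_def)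
next
  fix g assume h: "(\<forall>\<xi>\<in>PQ n. g \<xi> \<in> HomS n)
      \<and> (\<forall>\<xi>\<in>PQ n. \<forall>\<eta>\<in>PQ n. g (qadd \<xi> \<eta>) = (\<lambda>\<zeta>. g \<xi> \<zeta> + g \<eta> \<zeta>))
      \<and> (\<forall>s. \<forall>\<xi>\<in>PQ n. g (qsmult n s \<xi>) = (\<lambda>\<zeta>. s * g \<xi> \<zeta>))
      \<and> (\<forall>a\<in>idx n. g (bas n a) = dual n (\<lambda>i. n - a i))
      \<and> (\<forall>\<xi>. \<xi> \<notin> PQ n \<longrightarrow> g \<xi> = (\<lambda>_. 0))"
  show "g = G n"
  proof (rule ext, rule ext)
    fix \<xi> \<zeta>
    show "g \<xi> \<zeta> = G n \<xi> \<zeta>"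
    proof (cases "\<xi> \<in> PQ n")
      case True
      have "islin n (\<lambda>\<xi>. g \<xi> \<zeta>)" using h by (simp add: islin_def)
      moreover have "\<And>a. a \<in> idx n \<Longrightarrow> g (bas n a) \<zeta> = G n (bas n a) \<zeta>"
        using h by (simp add: G_bas)
      ultimately show ?thesis using lin_eq[OF _ G_lin _ True] by blast
    next
      case False then show ?thesis using h by (simp add: G_def)
    qed
  qed
qed

lemma G_dualbas:
  fixes a :: "'v::finite \<Rightarrow> nat" and p :: "('a::comm_ring_1,'v) P"
  shows "a \<in> idx n \<Longrightarrow> G n (cls n p) (bas n (\<lambda>i. n - a i)) = coef a p"
proof -
  assume a: "a \<in> idx n"
  have "G n (cls n p) (bas n (\<lambda>i. n - a i)) = (\<Sum>b\<in>idx n. coef b p * G n (bas n b) (bas n (\<lambda>i. n - a i)))"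
    using lin_span[OF G_lin] by blast
  also have "\<dots> = (\<Sum>b\<in>idx n. if b = a then coef b p else 0)"
  proof (rule sum.cong[OF refl])
    fix b :: "'v \<Rightarrow> nat" assume b: "b \<in> idx n"
    have "(b i + (n - a i) = n) = (b i = a i)" for i
    proof -
      have "a i \<le> n" "b i \<le> n" using a b by (auto simp: idx_def)
      then show ?thesis by arith
    qed
    then have "((\<lambda>i. b i + (n - a i)) = NN n) = (b = a)"
      by (simp add: fun_eq_iff)
    then show "coef b p * G n (bas n b) (bas n (\<lambda>i. n - a i)) = (if b = a then coef b p else 0)"
      by (simp add: G_bas_bas)
  qed
  also have "\<dots> = coef a p" by (subst sum.delta[OF idx_finite]) (simp add: a)
  finally show ?thesis .
qed

lemma G_inj: "inj_on (G n) (PQ n :: ('a::comm_ring_1,'v::finite) P set set)"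
proof (rule inj_onI)
  fix \<xi> \<eta> :: "('a,'v) P set" assume "\<xi> \<in> PQ n" "\<eta> \<in> PQ n" and e: "G n \<xi> = G n \<eta>"
  then obtain p q where pq: "\<xi> = cls n p" "\<eta> = cls n q" by (auto elim!: PQ_E)
  have "coef a p = coef a q" if "a \<in> idx n" for a
    using e G_dualbas[OF that, of p] G_dualbas[OF that, of q] pq by simp
  then have "(\<Sum>a\<in>idx n. iota1 (coef a p) * Tp a) = (\<Sum>a\<in>idx n. iota1 (coef a q) * Tp a)"
    by (intro sum.cong) simp_all
  then show "\<xi> = \<eta>" using pq cls_decomp[of n p] cls_decomp[of n q] by simp
qed

lemma G_surj:
  fixes \<phi> :: "('a::comm_ring_1,'v::finite) P set \<Rightarrow> ('a,'v) S"
  shows "\<phi> \<in> HomS n \<Longrightarrow> \<phi> \<in> G n ` PQ n"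
proof -
  assume h: "\<phi> \<in> HomS n"
  define p :: "('a,'v) P" where "p = (\<Sum>a\<in>idx n. iota1 (\<phi> (bas n (\<lambda>i. n - a i))) * Tp a)"
  have "G n (cls n p) = \<phi>"
  proof (rule HomS_eq[OF G_HomS h])
    fix c :: "'v \<Rightarrow> nat" assume c: "c \<in> idx n"
    have cc: "(\<lambda>i. n - (n - c i)) = c" using c by (auto simp: idx_def fun_eq_iff)
    have "G n (cls n p) (bas n c) = G n (cls n p) (bas n (\<lambda>i. n - (n - c i)))" by (simp add: cc)
    also have "\<dots> = coef (\<lambda>i. n - c i) p" by (rule G_dualbas[OF compl_idx[OF c]])
    also have "\<dots> = \<phi> (bas n c)" unfolding p_def by (subst coef_lin[OF compl_idx[OF c]]) (simp add: cc)
    finally show "G n (cls n p) (bas n c) = \<phi> (bas n c)" .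
  qed
  then show ?thesis by (metis cls_in image_eqI)
qed

lemma G_bij: "bij_betw (G n) (PQ n) (HomS n)"
  unfolding bij_betw_def
  using G_inj G_surj by (auto elim!: PQ_E simp: G_HomS)

lemma G_Hact: "\<xi> \<in> PQ n \<Longrightarrow> G n (qact n p \<xi>) = Hact n p (G n \<xi>)"
proof -
  assume "\<xi> \<in> PQ n"
  then obtain q where q: "\<xi> = cls n q" by (rule PQ_E)
  show ?thesis
  proof
    fix \<zeta> show "G n (qact n p \<xi>) \<zeta> = Hact n p (G n \<xi>) \<zeta>"
    proof (cases "\<zeta> \<in> PQ n")
      case True
      then obtain r where r: "\<zeta> = cls n r" by (rule PQ_E)
      show ?thesis by (simp add: q r qact_cls Hact_cls G_cls_cls mult_ac)
    next
      case False then show ?thesis by (simp add: Hact_def G_notin)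
    qed
  qed
qed

lemma H_eq: "koszul_top (\<lambda>i::'v::finite. (PY i - PX i :: ('a::comm_ring_1,'v) P) ^ Suc n) = PQ n"
  unfolding koszul_top_def PQ_def cls_def Delta_def by (simp add: mult.commute)

theorem proposition3p1:
  fixes n :: nat
  defines "H \<equiv> koszul_top (\<lambda>i::'v::finite. (PY i - PX i :: ('a::comm_ring_1,'v) P) ^ Suc n)"
  shows "H = PQ n
    \<and> bij_betw (gamma n) H (HomS n)
    \<and> (\<forall>\<xi>\<in>H. \<forall>\<eta>\<in>H. gamma n (qadd \<xi> \<eta>) = (\<lambda>\<zeta>. gamma n \<xi> \<zeta> + gamma n \<eta> \<zeta>))
    \<and> (\<forall>p. \<forall>\<xi>\<in>H. gamma n (qact n p \<xi>) = Hact n p (gamma n \<xi>))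
    \<and> bij_betw (rho_star n) (HomS n :: (('a,'v) P set \<Rightarrow> ('a,'v) S) set) (Dn n)
    \<and> (\<forall>\<phi>\<in>(HomS n :: (('a,'v) P set \<Rightarrow> ('a,'v) S) set). \<forall>\<psi>\<in>HomS n. rho_star n (\<lambda>\<zeta>. \<phi> \<zeta> + \<psi> \<zeta>) = (\<lambda>f. rho_star n \<phi> f + rho_star n \<psi> f))
    \<and> (\<forall>p. \<forall>\<phi>\<in>(HomS n :: (('a,'v) P set \<Rightarrow> ('a,'v) S) set). rho_star n (Hact n p \<phi>) = Pact p (rho_star n \<phi>))"
proof -
  have HP: "H = PQ n" unfolding H_def by (rule H_eq)
  have A: "\<forall>\<xi>\<in>H. \<forall>\<eta>\<in>H. gamma n (qadd \<xi> \<eta>) = (\<lambda>\<zeta>. gamma n \<xi> \<zeta> + gamma n \<eta> \<zeta>)"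
    unfolding HP gamma_eq using G_lin by (auto simp: islin_def fun_eq_iff)
  have R: "\<forall>\<phi>\<in>(HomS n :: (('a,'v) P set \<Rightarrow> ('a,'v) S) set). \<forall>\<psi>\<in>HomS n. rho_star n (\<lambda>\<zeta>. \<phi> \<zeta> + \<psi> \<zeta>) = (\<lambda>f. rho_star n \<phi> f + rho_star n \<psi> f)"
    by (simp add: rho_star_def comp_def)
  have B: "bij_betw (gamma n) H (HomS n)" unfolding HP gamma_eq by (rule G_bij)
  have C: "\<forall>p. \<forall>\<xi>\<in>H. gamma n (qact n p \<xi>) = Hact n p (gamma n \<xi>)"
    unfolding HP gamma_eq using G_Hact by blast
  have D: "\<forall>p. \<forall>\<phi>\<in>(HomS n :: (('a,'v) P set \<Rightarrow> ('a,'v) S) set). rho_star n (Hact n p \<phi>) = Pact p (rho_star n \<phi>)"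
    using rho_Hact by blast
  show ?thesis using HP A B C D R rho_bij by blast
qed

end
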